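(* Let $m,n,p \in \mathbb{N}$. The symmetric Kronecker product $\underline{\otimes}$ (defined in the context) on rectangular matrices has the following properties. (a) (Symmetry) $A \,\underline{\otimes}\, B = B \,\underline{\otimes}\, A$ for all $A,B\in\mathbb{R}^{m\times n}$. (b) (Mixed vector product) $(A\,\underline{\otimes}\, B)\operatorname{svec}(\pi(C)) = \operatorname{svec}(\pi(B\,\pi(C)\,A^T))$ for all $A,B\in\mathbb{R}^{m\times n}$, $C\in\mathbb{R}^{n\times n}$. (c) (Transpose) $(A\,\underline{\otimes}\, B)^T = A^T\,\underline{\otimes}\, B^T$ for all $A,B\in\mathbb{R}^{m\times n}$. (d) (Mixed products) For $A,B\in\mathbb{R}^{m\times n}$ and $C,D\in\mathbb{R}^{n\times p}$: $(A\,\underline{\otimes}\, B)(C\,\underline{\otimes}\, D) = \tfrac12\left(AC\,\underline{\otimes}\, BD + AD\,\underline{\otimes}\, BC\right)$; in particular $(A\,\underline{\otimes}\, B)(C\,\underline{\otimes}\, C) = AC\,\underline{\otimes}\, BC$. Also, for $A,B\in\mathbb{R}^{m\times n}$ and $C\in\mathbb{R}^{p\times m}$: $(C\,\underline{\otimes}\, C)(A\,\underline{\otimes}\, B) = CA\,\underline{\otimes}\, CB$. (e) (Shared eigenvectors) Let $A,B\in\mathbb{R}^{n\times n}$ and let $x,y\in\mathbb{C}^n$ be nonzero with $Ax=\lambda_1x$, $Bx=\mu_1x$, $Ay=\lambda_2y$, $By=\mu_2y$. Then $x\,\underline{\otimes}\, y$ is an eigenvector of $A\,\underline{\otimes}\,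 B$ with eigenvalue $\tfrac12(\lambda_1\mu_2+\lambda_2\mu_1)$. (f) (Zero) For $A,B\in\mathbb{R}^{m\times n}$, $A\,\underline{\otimes}\, B = 0$ if and only if $A=0$ or $B=0$.
   Context: For $k \in \mathbb{N}$ let $\underline{k} = k(k+1)/2$, $\mathbb{S}^k$ the real symmetric $k\times k$ matrices, $\langle A,B\rangle_F=\operatorname{tr}(A^TB)$, $\operatorname{vec}$ column-stacking vectorization, $\otimes$ the standard Kronecker product, $e_1,\dots,e_k$ the standard basis of $\mathbb{R}^k$. Enumerate the pairs $(r,c)$, $1\le r\le c\le k$, in the order $(1,1),(1,2),\dots,(1,k),(2,2),\dots,(2,k),\dots,(k,k)$ as $(r(\ell),c(\ell))$, $\ell=1,\dots,\underline{k}$, and set $E_\ell = e_{r(\ell)}e_{r(\ell)}^T$ if $r(\ell)=c(\ell)$, $E_\ell=\frac{\sqrt2}{2}(e_{r(\ell)}e_{c(\ell)}^T+e_{c(\ell)}e_{r(\ell)}^T)$ if $r(\ell)<c(\ell)$. Let $W_k\in\mathbb{R}^{\underline{k}\times k^2}$ have $\ell$-th row $\operatorname{vec}(E_\ell)^T$. For $A,B\in\mathbb{R}^{m\times n}$ (or $\mathbb{C}^{m\times n}$, same formula) the symmetric Kronecker product is $A\,\underline{\otimes}\, B = W_m(A\otimes B)W_n^T\in\mathbb{R}^{\underline{m}\times\underline{n}}$; for column vectors $x,y\in\mathbb{C}^n$ this gives $x\,\underline{\otimes}\, y = W_n(x\otimes y)\in\mathbb{C}^{\underline{n}}$ (as $W_1=1$).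 $\operatorname{svec}:\mathbb{S}^n\to\mathbb{R}^{\underline n}$, $\operatorname{svec}(P) = W_n\operatorname{vec}(P) = (\langle P,E_1\rangle_F,\dots,\langle P,E_{\underline n}\rangle_F)^T$, and $\pi(A) = (A+A^T)/2$ for square $A$. *)

theory Defs
  imports Complex_Main "Jordan_Normal_Form.Char_Poly"
begin

text \<open>Indices are 0-based throughout (the paper uses 1-based indices).\<close>

definition tri :: "nat \<Rightarrow> nat" where
  "tri k = k * (k + 1) div 2"

definition sym_pairs :: "nat \<Rightarrow> (nat \<times> nat) list" where
  "sym_pairs k = concat (map (\<lambda>r. map (\<lambda>c. (r, c)) [r..<k]) [0..<k])"

definition mvec :: "'a mat \<Rightarrow> 'a vec" where
  "mvec M = vec (dim_row M * dim_col M) (\<lambda>i. M $$ (i mod dim_row M, i div dim_row M))"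

definition symE :: "nat \<Rightarrow> nat \<Rightarrow> 'a :: real_field mat" where
  "symE k l = (let (r, c) = sym_pairs k ! l in
     mat k k (\<lambda>(i, j).
       if r = c then (if i = r \<and> j = r then 1 else 0)
       else (if (i = r \<and> j = c) \<or> (i = c \<and> j = r) then of_real (sqrt 2 / 2) else 0)))"

definition Wmat :: "nat \<Rightarrow> 'a :: real_field mat" where
  "Wmat k = mat (tri k) (k * k) (\<lambda>(l, j). mvec (symE k l :: 'a mat) $ j)"

definition kron :: "'a :: times mat \<Rightarrow> 'a mat \<Rightarrow> 'a mat" where
  "kron A B = mat (dim_row A * dim_row B) (dim_col A * dim_col B)
     (\<lambda>(i, j). A $$ (i div dim_row B, j div dim_col B) * B $$ (i mod dim_row B, j mod dim_col B))"

definition kron_vec :: "'a :: times vec \<Rightarrow> 'a vec \<Rightarrow> 'a vec" where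
  "kron_vec x y = vec (dim_vec x * dim_vec y) (\<lambda>i. x $ (i div dim_vec y) * y $ (i mod dim_vec y))"

definition symkron :: "'a :: real_field mat \<Rightarrow> 'a mat \<Rightarrow> 'a mat" where
  "symkron A B = Wmat (dim_row A) * kron A B * transpose_mat (Wmat (dim_col A))"

text \<open>Symmetric Kronecker product of column vectors x, y of length n: W_n (x \<otimes> y)
  (this equals the matrix definition applied to n x 1 matrices since W_1 = 1).\<close>
definition symkron_vec :: "'a :: real_field vec \<Rightarrow> 'a vec \<Rightarrow> 'a vec" where
  "symkron_vec x y = Wmat (dim_vec x) *\<^sub>v kron_vec x y"

definition svec :: "'a :: real_field mat \<Rightarrow> 'a vec" where
  "svec P = Wmat (dim_row P) *\<^sub>v mvec P"

definition symp :: "real mat \<Rightarrow> real mat" where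
  "symp A = (1/2) \<cdot>\<^sub>m (A + transpose_mat A)"

end

theory Submission
  imports Defs
begin


lemma sym_pairs_set: "set (sym_pairs k) = {(r,c). r \<le> c \<and> c < k}"
  unfolding sym_pairs_def by (force simp: image_iff)

lemma sym_pairs_distinct: "distinct (sym_pairs k)"
  unfolding sym_pairs_def
proof (rule distinct_concat)
  show "distinct (map (\<lambda>r. map (Pair r) [r..<k]) [0..<k])"
  proof -
    have "inj_on (\<lambda>r. map (Pair r) [r..<k]) {0..<k}"
    proof (rule inj_onI)
      fix x y assume "x \<in> {0..<k}" "y \<in> {0..<k}" "map (Pair x) [x..<k] = map (Pair y) [y..<k]"
      then have "hd (map (Pair x) [x..<k]) = hd (map (Pair y) [y..<k])" by simp
      with \<open>x \<in> {0..<k}\<close> \<open>y \<in> {0..<k}\<close> show "x = y" by (simp add: upt_conv_Cons)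
    qed
    then show ?thesis by (simp add: distinct_map)
  qed
qed (auto simp: distinct_map inj_on_def)

lemma tri_Suc: "tri (Suc k) = tri k + Suc k"
  unfolding tri_def by (induct k) auto

lemma sum_tri: "(\<Sum>r<k. k - r) = tri k"
proof (induct k)
  case 0 then show ?case by (simp add: tri_def)
next
  case (Suc k)
  have "(\<Sum>r<Suc k. Suc k - r) = (\<Sum>r<k. Suc k - r) + 1" by simp
  also have "(\<Sum>r<k. Suc k - r) = (\<Sum>r<k. (k - r) + 1)"
    by (rule sum.cong) auto
  also have "\<dots> = (\<Sum>r<k. k - r) + k" by (subst sum.distrib) simp
  also have "\<dots> = tri k + k" using Suc by simp
  finally show ?case by (simp add: tri_Suc)
qed

lemma sym_pairs_length: "length (sym_pairs k) = tri k"
  unfolding sym_pairs_def by (simp add: length_concat sum_list_distinct_conv_sum_set sum_tri[symmetric] o_def atLeast0LessThan)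

lemma sum_reindex: fixes a b :: nat shows "(\<Sum>u<a*b. f (u mod a) (u div a)) = (\<Sum>i<a. \<Sum>j<b. f i j)"
proof (cases "a = 0")
  case False
  have "(\<Sum>u<b*a. f (u mod a) (u div a)) = (\<Sum>j<b. \<Sum>u\<in>{j*a..<j*a+a}. f (u mod a) (u div a))"
    by (rule sum.nat_group[symmetric])
  also have "\<dots> = (\<Sum>j<b. \<Sum>i<a. f i j)"
  proof (rule sum.cong[OF refl])
    fix j
    have "(\<Sum>u\<in>{j*a..<j*a+a}. f (u mod a) (u div a)) = (\<Sum>i\<in>{0..<a}. f ((i + j*a) mod a) ((i+j*a) div a))"
      using sum.shift_bounds_nat_ivl[of "\<lambda>u. f (u mod a) (u div a)" 0 "j*a" a] by (simp add: add.commute)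
    also have "\<dots> = (\<Sum>i<a. f i j)" using False by (intro sum.cong) auto
    finally show "(\<Sum>u\<in>{j*a..<j*a+a}. f (u mod a) (u div a)) = (\<Sum>i<a. f i j)" .
  qed
  finally show ?thesis by (simp add: sum.swap[of _ "{..<b}"] mult.commute)
qed simp



definition wgt :: "nat \<Rightarrow> nat \<Rightarrow> 'a::real_field" where
  "wgt r c = (if r = c then 1/2 else of_real (sqrt 2 / 2))"

definition dl :: "nat \<Rightarrow> nat \<Rightarrow> nat \<Rightarrow> nat \<Rightarrow> 'a::real_field" where
  "dl r c i j = (if i = r \<and> j = c then 1 else 0) + (if i = c \<and> j = r then 1 else 0)"

lemma wgt_sq: "wgt r c * wgt r c = (if r = c then 1/4 else (1/2 :: 'a::real_field))"
proof -
  have "(of_real (sqrt 2 / 2) :: 'a) * of_real (sqrt 2 / 2) = of_real (sqrt 2 / 2 * (sqrt 2 / 2))"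
    by (simp only: of_real_mult)
  also have "sqrt 2 / 2 * (sqrt 2 / 2) = (1/2::real)" by (simp add: field_simps)
  finally show ?thesis unfolding wgt_def by simp
qed

lemma pairs_lt: "l < tri k \<Longrightarrow> sym_pairs k ! l = (r,c) \<Longrightarrow> r \<le> c \<and> c < k"
  using nth_mem[of l "sym_pairs k"] sym_pairs_set[of k] sym_pairs_length[of k] by auto

lemma pairs_ex: "r \<le> c \<Longrightarrow> c < k \<Longrightarrow> \<exists>l<tri k. sym_pairs k ! l = (r,c)"
proof -
  assume "r \<le> c" "c < k"
  then have "(r,c) \<in> set (sym_pairs k)" using sym_pairs_set by auto
  then show ?thesis by (auto simp: in_set_conv_nth sym_pairs_length)
qed

lemma pairs_inj: "l < tri k \<Longrightarrow> l' < tri k \<Longrightarrow> sym_pairs k ! l = sym_pairs k ! l' \<Longrightarrow> l = l'"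
  using nth_eq_iff_index_eq[OF sym_pairs_distinct] sym_pairs_length by metis

lemma sum_single: "(l0::nat) < N \<Longrightarrow> (\<And>l. l < N \<Longrightarrow> l \<noteq> l0 \<Longrightarrow> f l = 0) \<Longrightarrow> (\<Sum>l<N. f l) = f l0"
  by (subst sum.remove[of _ l0]) (auto intro!: sum.neutral)

lemma double_delta: "(a::nat) < n \<Longrightarrow> (b::nat) < m \<Longrightarrow> (\<Sum>i<n. \<Sum>j<m. if i = a \<and> j = b then f i j else 0) = f a b"
proof -
  assume a: "a < n" and b: "b < m"
  have "(\<Sum>i<n. \<Sum>j<m. if i = a \<and> j = b then f i j else 0) = (\<Sum>i<n. if i = a then f i b else 0)"
  proof (intro sum.cong refl)
    fix i show "(\<Sum>j<m. if i = a \<and> j = b then f i j else 0) = (if i = a then f i b else 0)"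
      using b by (cases "i = a") simp_all
  qed
  also have "\<dots> = f a b" using a by simp
  finally show ?thesis .
qed

lemma symE_carrier: "symE k l \<in> carrier_mat k k"
  unfolding symE_def by (auto split: prod.splits)

lemma symE_dims[simp]: "dim_row (symE k l) = k" "dim_col (symE k l) = k"
  using symE_carrier by auto

lemma Wmat_dims[simp]: "dim_row (Wmat k) = tri k" "dim_col (Wmat k) = k * k"
  unfolding Wmat_def by auto

lemma symE_entry: "sym_pairs k ! l = (r,c) \<Longrightarrow> i < k \<Longrightarrow> j < k \<Longrightarrow>
   symE k l $$ (i,j) = wgt r c * dl r c i j"
  unfolding symE_def wgt_def dl_def by auto

lemma mvec_dim[simp]: "dim_vec (mvec M) = dim_row M * dim_col M"
  unfolding mvec_def by simp

lemma mvec_index: "u < dim_row M * dim_col M \<Longrightarrow> mvec M $ u = M $$ (u mod dim_row M, u div dim_row M)"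
  unfolding mvec_def by simp

lemma Wmat_carrier: "Wmat k \<in> carrier_mat (tri k) (k*k)"
  unfolding Wmat_def by simp

lemma Wmat_index: "l < tri k \<Longrightarrow> u < k * k \<Longrightarrow> Wmat k $$ (l,u) = symE k l $$ (u mod k, u div k)"
  unfolding Wmat_def by (simp add: mvec_index)

lemma svec_dim: "X \<in> carrier_mat k k \<Longrightarrow> svec X \<in> carrier_vec (tri k)"
  unfolding svec_def using Wmat_carrier by (simp add: carrier_vecI)

lemma svec_index: assumes X: "X \<in> carrier_mat k k" and l: "l < tri k" and p: "sym_pairs k ! l = (r,c)"
  shows "svec X $ l = wgt r c * (X $$ (r,c) + X $$ (c,r))"
proof -
  have rc: "r < k" "c < k" using pairs_lt[OF l p] by auto
  have "svec X $ l = (\<Sum>u<k*k. Wmat k $$ (l,u) * mvec X $ u)"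
    unfolding svec_def using X l
    by (simp add: scalar_prod_def atLeast0LessThan index_mult_mat_vec)
  also have "\<dots> = (\<Sum>u<k*k. symE k l $$ (u mod k, u div k) * X $$ (u mod k, u div k))"
    using X l by (intro sum.cong) (auto simp: Wmat_index mvec_index)
  also have "\<dots> = (\<Sum>i<k. \<Sum>j<k. symE k l $$ (i,j) * X $$ (i,j))"
    by (rule sum_reindex)
  also have "\<dots> = (\<Sum>i<k. \<Sum>j<k. wgt r c * dl r c i j * X $$ (i,j))"
    by (intro sum.cong refl) (simp add: symE_entry[OF p])
  also have "\<dots> = wgt r c * (X $$ (r,c) + X $$ (c,r))"
  proof -
    have "(\<Sum>i<k. \<Sum>j<k. wgt r c * dl r c i j * X $$ (i,j)) =
      wgt r c * ((\<Sum>i<k. \<Sum>j<k. if i = r \<and> j = c then X $$ (i,j) else 0) + (\<Sum>i<k. \<Sum>j<k. if i = c \<and> j = r then X $$ (i,j) else 0))"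
    proof -
      have "\<And>i j. wgt r c * dl r c i j * X $$ (i,j) = wgt r c * ((if i = r \<and> j = c then X $$ (i,j) else 0) + (if i = c \<and> j = r then X $$ (i,j) else 0))"
      proof -
        have e: "\<And>P (x::'a). (if P then 1 else 0) * x = (if P then x else 0)" by simp
        fix i j show "wgt r c * dl r c i j * X $$ (i,j) = wgt r c * ((if i = r \<and> j = c then X $$ (i,j) else 0) + (if i = c \<and> j = r then X $$ (i,j) else 0))"
          unfolding dl_def mult.assoc distrib_right e ..
      qed
      note pw = this
      have "(\<Sum>i<k. \<Sum>j<k. wgt r c * dl r c i j * X $$ (i,j)) =
         (\<Sum>i<k. \<Sum>j<k. wgt r c * ((if i = r \<and> j = c then X $$ (i,j) else 0) + (if i = c \<and> j = r then X $$ (i,j) else 0)))"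
        by (simp only: pw)
      also have "\<dots> = wgt r c * (\<Sum>i<k. \<Sum>j<k. ((if i = r \<and> j = c then X $$ (i,j) else 0) + (if i = c \<and> j = r then X $$ (i,j) else 0)))"
        by (simp only: sum_distrib_left)
      also have "(\<Sum>i<k. \<Sum>j<k. ((if i = r \<and> j = c then X $$ (i,j) else 0) + (if i = c \<and> j = r then X $$ (i,j) else 0)))
        = (\<Sum>i<k. \<Sum>j<k. if i = r \<and> j = c then X $$ (i,j) else 0) + (\<Sum>i<k. \<Sum>j<k. if i = c \<and> j = r then X $$ (i,j) else 0)"
        by (simp only: sum.distrib)
      finally show ?thesis .
    qed
    also have "\<dots> = wgt r c * (X $$ (r,c) + X $$ (c,r))"
      using rc by (simp only: double_delta)
    finally show ?thesis .
  qed
  finally show ?thesis .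
qed

definition smat :: "nat \<Rightarrow> 'a::real_field vec \<Rightarrow> 'a mat" where
  "smat k v = mat k k (\<lambda>(i,j). \<Sum>l<tri k. v $ l * symE k l $$ (i,j))"

lemma smat_carrier: "smat k v \<in> carrier_mat k k"
  unfolding smat_def by simp

lemma WT_mult: assumes v: "v \<in> carrier_vec (tri k)"
  shows "transpose_mat (Wmat k) *\<^sub>v v = mvec (smat k v)"
proof (rule eq_vecI)
  show "dim_vec (transpose_mat (Wmat k) *\<^sub>v v) = dim_vec (mvec (smat k v))"
    using Wmat_carrier[of k] by (simp add: smat_def)
  fix u assume "u < dim_vec (mvec (smat k v))"
  then have u: "u < k * k" by (simp add: smat_def)
  have k0: "k > 0" using u by (cases k) auto
  have "u mod k < k" "u div k < k" using k0 u by (auto simp: less_mult_imp_div_less)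
  note uu = this
  have "(transpose_mat (Wmat k) *\<^sub>v v) $ u = (\<Sum>l<tri k. Wmat k $$ (l,u) * v $ l)"
    using u v by (simp add: index_mult_mat_vec scalar_prod_def atLeast0LessThan)
  also have "\<dots> = (\<Sum>l<tri k. v $ l * symE k l $$ (u mod k, u div k))"
    using u by (intro sum.cong refl) (simp add: Wmat_index)
  also have "\<dots> = mvec (smat k v) $ u"
    using u uu by (simp add: mvec_index smat_carrier[THEN carrier_matD(1)] smat_carrier[THEN carrier_matD(2)]) (simp add: smat_def)
  finally show "(transpose_mat (Wmat k) *\<^sub>v v) $ u = mvec (smat k v) $ u" .
qed

lemma dl_minmax: "dl (min i j) (max i j) i j = (if i = j then 2 else 1)"
proof (cases "i < j")
  case True then show ?thesis by (simp add: dl_def min_def max_def)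
next
  case False then show ?thesis by (cases "i = j") (simp_all add: dl_def min_def max_def)
qed

lemma smat_entry: assumes i: "i < k" and j: "j < k" and l0: "l0 < tri k"
  and p: "sym_pairs k ! l0 = (min i j, max i j)"
  shows "smat k v $$ (i,j) = v $ l0 * wgt (min i j) (max i j) * (if i = j then 2 else 1)"
proof -
  have "smat k v $$ (i,j) = (\<Sum>l<tri k. v $ l * symE k l $$ (i,j))"
    unfolding smat_def using i j by simp
  also have "\<dots> = v $ l0 * symE k l0 $$ (i,j)"
  proof (rule sum_single[OF l0])
    fix l assume l: "l < tri k" "l \<noteq> l0"
    obtain r c where rc: "sym_pairs k ! l = (r,c)" by fastforce
    have "r \<le> c" using pairs_lt[OF l(1) rc] by auto
    moreover have "(r,c) \<noteq> (min i j, max i j)" using pairs_inj[OF l(1) l0] l(2) rc p by auto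
    ultimately have n1: "\<not> (i = r \<and> j = c)" and n2: "\<not> (i = c \<and> j = r)"
      by (metis max.absorb2 max.commute min.absorb1 min.commute)+
    have "dl r c i j = (0::'a)" unfolding dl_def using n1 n2 by (simp only: if_False) simp
    then show "v $ l * symE k l $$ (i,j) = 0" by (simp add: symE_entry[OF rc i j])
  qed
  also have "\<dots> = v $ l0 * wgt (min i j) (max i j) * (if i = j then 2 else 1)"
    by (simp add: symE_entry[OF p i j] dl_minmax)
  finally show ?thesis .
qed

definition gsym :: "'a::real_field mat \<Rightarrow> 'a mat" where
  "gsym A = (1/2) \<cdot>\<^sub>m (A + transpose_mat A)"

lemma smat_dims[simp]: "dim_row (smat k v) = k" "dim_col (smat k v) = k"
  unfolding smat_def by simp_all

lemma gsym_carrier: "A \<in> carrier_mat k k \<Longrightarrow> gsym A \<in> carrier_mat k k"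
  unfolding gsym_def by auto

lemma smat_svec: assumes X: "X \<in> carrier_mat k k"
  shows "smat k (svec X) = gsym X"
proof (rule eq_matI)
  fix i j assume "i < dim_row (gsym X)" "j < dim_col (gsym X)"
  then have i: "i < k" and j: "j < k" using gsym_carrier[OF X] by auto
  have "max i j < k" "min i j \<le> max i j" using i j by auto
  then obtain l0 where l0: "l0 < tri k" "sym_pairs k ! l0 = (min i j, max i j)"
    using pairs_ex[of "min i j" "max i j" k] by blast
  have "smat k (svec X) $$ (i,j) = svec X $ l0 * wgt (min i j) (max i j) * (if i = j then 2 else 1)"
    by (rule smat_entry[OF i j l0])
  also have "\<dots> = wgt (min i j) (max i j) * (X $$ (min i j, max i j) + X $$ (max i j, min i j)) * wgt (min i j) (max i j) * (if i = j then 2 else 1)"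
    by (simp add: svec_index[OF X l0])
  also have "\<dots> = (wgt (min i j) (max i j) * wgt (min i j) (max i j)) * (X $$ (min i j, max i j) + X $$ (max i j, min i j)) * (if i = j then 2 else 1)"
    by (simp only: ac_simps)
  also have "\<dots> = gsym X $$ (i,j)"
  proof (cases "i = j")
    case True
    then show ?thesis using i j X by (simp add: gsym_def wgt_sq)
  next
    case False
    have "X $$ (min i j, max i j) + X $$ (max i j, min i j) = X $$ (i,j) + X $$ (j,i)"
      by (cases "i < j") (auto simp: min_def max_def)
    then show ?thesis using False i j X by (simp add: gsym_def wgt_sq)
  qed
  finally show "smat k (svec X) $$ (i,j) = gsym X $$ (i,j)" .
qed (use gsym_carrier[OF X] in \<open>simp_all\<close>)



lemma svec_smat: assumes v: "v \<in> carrier_vec (tri k)"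
  shows "svec (smat k v) = v"
proof (rule eq_vecI)
  show "dim_vec (svec (smat k v)) = dim_vec v"
    using svec_dim[OF smat_carrier[of k v]] v by simp
  fix l assume "l < dim_vec v"
  then have l: "l < tri k" using v by simp
  obtain r c where p: "sym_pairs k ! l = (r,c)" by fastforce
  have rc: "r \<le> c" "c < k" using pairs_lt[OF l p] by auto
  have p1: "sym_pairs k ! l = (min r c, max r c)" using p rc by simp
  have p2: "sym_pairs k ! l = (min c r, max c r)" using p rc by simp
  have "svec (smat k v) $ l = wgt r c * (smat k v $$ (r,c) + smat k v $$ (c,r))"
    by (rule svec_index[OF smat_carrier l p])
  also have "smat k v $$ (r,c) = v $ l * wgt r c * (if r = c then 2 else 1)"
    using smat_entry[OF _ _ l p1, of v] rc by simp
  also have "smat k v $$ (c,r) = v $ l * wgt r c * (if r = c then 2 else 1)"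
    using smat_entry[OF _ _ l p2, of v] rc by (simp add: min_def max_def)
  also have "wgt r c * (v $ l * wgt r c * (if r = c then 2 else 1) + v $ l * wgt r c * (if r = c then 2 else 1))
     = (wgt r c * wgt r c) * (if r = c then 4 else 2) * v $ l"
    by (simp add: algebra_simps)
  also have "\<dots> = v $ l" by (simp add: wgt_sq)
  finally show "svec (smat k v) $ l = v $ l" .
qed

lemma svec_eqI: assumes X: "X \<in> carrier_mat k k" and Y: "Y \<in> carrier_mat k k"
  and h: "\<And>r c. r \<le> c \<Longrightarrow> c < k \<Longrightarrow> X $$ (r,c) + X $$ (c,r) = Y $$ (r,c) + Y $$ (c,r)"
  shows "svec X = svec Y"
proof (rule eq_vecI)
  show "dim_vec (svec X) = dim_vec (svec Y)" using svec_dim[OF X] svec_dim[OF Y] by simp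
  fix l assume "l < dim_vec (svec Y)"
  then have l: "l < tri k" using svec_dim[OF Y] by simp
  obtain r c where p: "sym_pairs k ! l = (r,c)" by fastforce
  have rc: "r \<le> c" "c < k" using pairs_lt[OF l p] by auto
  show "svec X $ l = svec Y $ l"
    using svec_index[OF X l p] svec_index[OF Y l p] h[OF rc] by simp
qed

lemma svec_transpose: "X \<in> carrier_mat k k \<Longrightarrow> svec (transpose_mat X) = svec X"
  by (rule svec_eqI) auto

lemma svec_gsym: "X \<in> carrier_mat k k \<Longrightarrow> svec (gsym X) = svec X"
  by (rule svec_eqI) (auto simp: gsym_carrier gsym_def field_simps)

lemma svec_add: assumes X: "X \<in> carrier_mat k k" and Y: "Y \<in> carrier_mat k k"
  shows "svec (X + Y) = svec X + svec Y"
proof (rule eq_vecI)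
  have XY0: "X + Y \<in> carrier_mat k k" using X Y by simp
  show "dim_vec (svec (X + Y)) = dim_vec (svec X + svec Y)" using svec_dim[OF X] svec_dim[OF Y] svec_dim[OF XY0] by simp
  fix l assume "l < dim_vec (svec X + svec Y)"
  then have l: "l < tri k" using svec_dim[OF X] svec_dim[OF Y] by simp
  obtain r c where p: "sym_pairs k ! l = (r,c)" by fastforce
  have rc: "r \<le> c" "c < k" using pairs_lt[OF l p] by auto
  have XY: "X + Y \<in> carrier_mat k k" using X Y by simp
  show "svec (X + Y) $ l = (svec X + svec Y) $ l"
    using svec_index[OF X l p] svec_index[OF Y l p] svec_index[OF XY l p] rc X Y l svec_dim[OF X] svec_dim[OF Y]
    by (simp add: algebra_simps)
qed

lemma svec_smult: assumes X: "X \<in> carrier_mat k k"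
  shows "svec (a \<cdot>\<^sub>m X) = a \<cdot>\<^sub>v svec X"
proof (rule eq_vecI)
  have aX0: "a \<cdot>\<^sub>m X \<in> carrier_mat k k" using X by simp
  show "dim_vec (svec (a \<cdot>\<^sub>m X)) = dim_vec (a \<cdot>\<^sub>v svec X)" using svec_dim[OF X] svec_dim[OF aX0] by simp
  fix l assume "l < dim_vec (a \<cdot>\<^sub>v svec X)"
  then have l: "l < tri k" using svec_dim[OF X] by simp
  obtain r c where p: "sym_pairs k ! l = (r,c)" by fastforce
  have rc: "r \<le> c" "c < k" using pairs_lt[OF l p] by auto
  have aX: "a \<cdot>\<^sub>m X \<in> carrier_mat k k" using X by simp
  show "svec (a \<cdot>\<^sub>m X) $ l = (a \<cdot>\<^sub>v svec X) $ l"
    using svec_index[OF X l p] svec_index[OF aX l p] rc X l svec_dim[OF X]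
    by (simp add: algebra_simps)
qed

lemma mat_eq_by_mult: fixes M N :: "'a::comm_ring_1 mat" assumes M: "M \<in> carrier_mat r c" and N: "N \<in> carrier_mat r c"
  and h: "\<And>v. v \<in> carrier_vec c \<Longrightarrow> M *\<^sub>v v = N *\<^sub>v v"
  shows "M = N"
proof (rule eq_matI)
  fix i j assume i: "i < dim_row N" and j: "j < dim_col N"
  have "M $$ (i,j) = (M *\<^sub>v unit_vec c j) $ i" using M N i j by simp
  also have "\<dots> = (N *\<^sub>v unit_vec c j) $ i" using h[of "unit_vec c j"] by simp
  also have "\<dots> = N $$ (i,j)" using N i j by simp
  finally show "M $$ (i,j) = N $$ (i,j)" .
qed (use M N in auto)

lemma kron_carrier: "kron A B \<in> carrier_mat (dim_row A * dim_row B) (dim_col A * dim_col B)"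
  unfolding kron_def by simp

lemma kron_mult_mvec: fixes A B X :: "'a::comm_ring_1 mat"
  assumes A: "A \<in> carrier_mat m n" and B: "B \<in> carrier_mat m' n'" and X: "X \<in> carrier_mat n' n"
  shows "kron A B *\<^sub>v mvec X = mvec (B * X * transpose_mat A)"
proof (rule eq_vecI)
  show "dim_vec (kron A B *\<^sub>v mvec X) = dim_vec (mvec (B * X * transpose_mat A))"
    using A B X by (simp add: kron_def)
  fix u assume "u < dim_vec (mvec (B * X * transpose_mat A))"
  then have u: "u < m' * m" using A B X by simp
  then have m0: "m' > 0" by (cases m') auto
  have u2: "u < m * m'" using u by (simp add: mult.commute)
  have ud: "u mod m' < m'" "u div m' < m" using u2 m0 by (auto simp: less_mult_imp_div_less)
  have "(kron A B *\<^sub>v mvec X) $ u = (\<Sum>w<n'*n. A $$ (u div m', w div n') * B $$ (u mod m', w mod n') * X $$ (w mod n', w div n'))"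
    using A B X u
    by (simp add: kron_def index_mult_mat_vec scalar_prod_def atLeast0LessThan mvec_index mult.commute[of m m'] mult.commute[of n n'])
  also have "\<dots> = (\<Sum>t<n'. \<Sum>j<n. A $$ (u div m', j) * B $$ (u mod m', t) * X $$ (t, j))"
    by (rule sum_reindex)
  also have "\<dots> = (\<Sum>j<n. \<Sum>t<n'. A $$ (u div m', j) * B $$ (u mod m', t) * X $$ (t, j))"
    by (rule sum.swap)
  also have "\<dots> = (\<Sum>j<n. \<Sum>t<n'. B $$ (u mod m', t) * X $$ (t, j) * A $$ (u div m', j))"
    by (intro sum.cong refl) (simp add: mult_ac)
  also have "\<dots> = (\<Sum>j<n. (\<Sum>t<n'. B $$ (u mod m', t) * X $$ (t, j)) * A $$ (u div m', j))"
    by (simp add: sum_distrib_right)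
  also have "\<dots> = mvec (B * X * transpose_mat A) $ u"
    using A B X u ud by (simp add: mvec_index index_mult_mat scalar_prod_def atLeast0LessThan del: assoc_mult_mat)
  finally show "(kron A B *\<^sub>v mvec X) $ u = mvec (B * X * transpose_mat A) $ u" .
qed

lemma symkron_carrier: assumes A: "A \<in> carrier_mat m n"
  shows "symkron A B \<in> carrier_mat (tri m) (tri n)"
  unfolding symkron_def using A Wmat_carrier[of m] Wmat_carrier[of n] by auto

lemma symkron_action: fixes A B :: "'a::real_field mat"
  assumes A: "A \<in> carrier_mat m n" and B: "B \<in> carrier_mat m n" and v: "v \<in> carrier_vec (tri n)"
  shows "symkron A B *\<^sub>v v = svec (B * smat n v * transpose_mat A)"
proof -
  have K: "kron A B \<in> carrier_mat (m*m) (n*n)" using kron_carrier[of A B] A B by simp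
  have W1: "Wmat m \<in> carrier_mat (tri m) (m*m)" by (rule Wmat_carrier)
  have W2: "transpose_mat (Wmat n) \<in> carrier_mat (n*n) (tri n)" using Wmat_carrier[of n] by simp
  have "symkron A B *\<^sub>v v = (Wmat m * kron A B * transpose_mat (Wmat n)) *\<^sub>v v"
    unfolding symkron_def using A by simp
  also have "\<dots> = Wmat m *\<^sub>v (kron A B *\<^sub>v (transpose_mat (Wmat n) *\<^sub>v v))"
  proof -
    have WK: "Wmat m * kron A B \<in> carrier_mat (tri m) (n*n)" by (rule mult_carrier_mat[OF W1 K])
    have "(Wmat m * kron A B * transpose_mat (Wmat n)) *\<^sub>v v = (Wmat m * kron A B) *\<^sub>v (transpose_mat (Wmat n) *\<^sub>v v)"
      by (rule assoc_mult_mat_vec[OF WK W2 v])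
    also have "\<dots> = Wmat m *\<^sub>v (kron A B *\<^sub>v (transpose_mat (Wmat n) *\<^sub>v v))"
      by (rule assoc_mult_mat_vec[OF W1 K mult_mat_vec_carrier[OF W2 v]])
    finally show ?thesis .
  qed
  also have "\<dots> = Wmat m *\<^sub>v mvec (B * smat n v * transpose_mat A)"
    using WT_mult[OF v] kron_mult_mvec[OF A B smat_carrier] by simp
  also have "\<dots> = svec (B * smat n v * transpose_mat A)"
    unfolding svec_def using A B by simp
  finally show ?thesis .
qed



lemma dl_sym: "dl r c i j = dl r c j i"
  unfolding dl_def by (cases "i = r"; cases "j = c"; cases "i = c"; cases "j = r") simp_all

lemma smat_transpose: "transpose_mat (smat k v) = smat k v"
proof (rule eq_matI)
  fix i j assume "i < dim_row (smat k v)" "j < dim_col (smat k v)"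
  then have i: "i < k" and j: "j < k" by auto
  have "(\<Sum>l<tri k. v $ l * symE k l $$ (j,i)) = (\<Sum>l<tri k. v $ l * symE k l $$ (i,j))"
  proof (rule sum.cong[OF refl])
    fix l obtain r c where p: "sym_pairs k ! l = (r,c)" by fastforce
    show "v $ l * symE k l $$ (j,i) = v $ l * symE k l $$ (i,j)"
      by (simp only: symE_entry[OF p i j] symE_entry[OF p j i] dl_sym[of r c j i])
  qed
  then show "transpose_mat (smat k v) $$ (i,j) = smat k v $$ (i,j)"
    using i j by (simp add: smat_def)
qed auto

lemma smult_mat_vec: "(M :: 'a::comm_ring_1 mat) \<in> carrier_mat r c \<Longrightarrow> v \<in> carrier_vec c \<Longrightarrow> (a \<cdot>\<^sub>m M) *\<^sub>v v = a \<cdot>\<^sub>v (M *\<^sub>v v)"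
  by (rule eq_vecI) (auto simp: scalar_prod_def sum_distrib_left mult.assoc)

lemma reassoc: fixes A B C D S :: "'a::comm_ring_1 mat"
  assumes A: "A \<in> carrier_mat m n" and B: "B \<in> carrier_mat m n"
  and C: "C \<in> carrier_mat n p" and D: "D \<in> carrier_mat n p" and S: "S \<in> carrier_mat p p"
  shows "B * (D * S * transpose_mat C) * transpose_mat A = (B * D) * S * transpose_mat (A * C)"
proof -
  have At: "transpose_mat A \<in> carrier_mat n m" and Ct: "transpose_mat C \<in> carrier_mat p n" using A C by auto
  have DS: "D * S \<in> carrier_mat n p" using D S by simp
  have ACt: "transpose_mat (A * C) \<in> carrier_mat p m" using A C by simp
  have DSC: "D * S * transpose_mat C \<in> carrier_mat n n" using DS Ct by simp
  have "B * (D * S * transpose_mat C) * transpose_mat A = B * (D * S * transpose_mat C * transpose_mat A)"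
    by (rule assoc_mult_mat[OF B DSC At])
  also have "D * S * transpose_mat C * transpose_mat A = D * S * (transpose_mat C * transpose_mat A)"
    by (rule assoc_mult_mat[OF DS Ct At])
  also have "transpose_mat C * transpose_mat A = transpose_mat (A * C)"
    by (rule transpose_mult[OF A C, symmetric])
  also have "B * (D * S * transpose_mat (A * C)) = B * (D * S) * transpose_mat (A * C)"
    by (rule assoc_mult_mat[OF B DS ACt, symmetric])
  also have "B * (D * S) = B * D * S"
    by (rule assoc_mult_mat[OF B D S, symmetric])
  finally show ?thesis .
qed

lemma gsym_mult: fixes A B Y :: "'a::real_field mat"
  assumes A: "A \<in> carrier_mat m n" and B: "B \<in> carrier_mat m n" and Y: "Y \<in> carrier_mat n n"
  shows "B * gsym Y * transpose_mat A = (1/2) \<cdot>\<^sub>m (B * Y * transpose_mat A + B * transpose_mat Y * transpose_mat A)"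
proof -
  have Yt: "transpose_mat Y \<in> carrier_mat n n" using Y by simp
  have At: "transpose_mat A \<in> carrier_mat n m" using A by simp
  have YY: "Y + transpose_mat Y \<in> carrier_mat n n" using Yt by simp
  have "B * gsym Y = (1/2) \<cdot>\<^sub>m (B * (Y + transpose_mat Y))"
    unfolding gsym_def by (rule mult_smult_distrib[OF B YY])
  also have "B * (Y + transpose_mat Y) = B * Y + B * transpose_mat Y"
    by (rule mult_add_distrib_mat[OF B Y Yt])
  finally have "B * gsym Y * transpose_mat A = ((1/2) \<cdot>\<^sub>m (B * Y + B * transpose_mat Y)) * transpose_mat A"
    by (rule arg_cong[where f="\<lambda>M. M * transpose_mat A"])
  also have "\<dots> = (1/2) \<cdot>\<^sub>m ((B * Y + B * transpose_mat Y) * transpose_mat A)"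
    by (rule mult_smult_assoc_mat[OF _ At, of _ m]) (use B Y Yt in \<open>intro add_carrier_mat mult_carrier_mat\<close>)
  also have "(B * Y + B * transpose_mat Y) * transpose_mat A = B * Y * transpose_mat A + B * transpose_mat Y * transpose_mat A"
  proof -
    have BY: "B * Y \<in> carrier_mat m n" using B Y by simp
    have BYt: "B * transpose_mat Y \<in> carrier_mat m n" using B Yt by simp
    show ?thesis by (rule add_mult_distrib_mat[OF BY BYt At])
  qed
  finally show ?thesis .
qed

lemma gsym_gsym: "X \<in> carrier_mat k k \<Longrightarrow> gsym (gsym X) = gsym X"
  by (rule eq_matI) (auto simp: gsym_def field_simps)

lemma symkron_comm: fixes A B :: "'a::real_field mat"
  assumes A: "A \<in> carrier_mat m n" and B: "B \<in> carrier_mat m n"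
  shows "symkron A B = symkron B A"
proof (rule mat_eq_by_mult[OF symkron_carrier[OF A] symkron_carrier[OF B]])
  fix v :: "'a vec" assume v: "v \<in> carrier_vec (tri n)"
  have S: "smat n v \<in> carrier_mat n n" by (rule smat_carrier)
  have X: "B * smat n v * transpose_mat A \<in> carrier_mat m m" using A B S by simp
  have "transpose_mat (B * smat n v * transpose_mat A) = A * smat n v * transpose_mat B"
  proof -
    have "transpose_mat (B * smat n v * transpose_mat A) = transpose_mat (transpose_mat A) * transpose_mat (B * smat n v)"
      by (rule transpose_mult[of _ m n]) (use A B S in simp_all)
    also have "transpose_mat (B * smat n v) = transpose_mat (smat n v) * transpose_mat B"
      by (rule transpose_mult[OF B S])
    finally have "transpose_mat (B * smat n v * transpose_mat A) = transpose_mat (transpose_mat A) * (transpose_mat (smat n v) * transpose_mat B)" .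
    also have "\<dots> = A * (smat n v * transpose_mat B)" by (simp only: transpose_transpose smat_transpose)
    also have "\<dots> = A * smat n v * transpose_mat B"
      by (rule assoc_mult_mat[symmetric, OF A S]) (use B in simp)
    finally show ?thesis .
  qed
  then show "symkron A B *\<^sub>v v = symkron B A *\<^sub>v v"
    using symkron_action[OF A B v] symkron_action[OF B A v] svec_transpose[OF X] by simp
qed

lemma kron_transpose: "transpose_mat (kron A B) = kron (transpose_mat A) (transpose_mat B)"
proof (rule eq_matI)
  fix i j assume "i < dim_row (kron (transpose_mat A) (transpose_mat B))" "j < dim_col (kron (transpose_mat A) (transpose_mat B))"
  then have i: "i < dim_col A * dim_col B" and j: "j < dim_row A * dim_row B" by (auto simp: kron_def)
  have b1: "dim_col B > 0" using i by (cases "dim_col B") auto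
  have b2: "dim_row B > 0" using j by (cases "dim_row B") auto
  have "i div dim_col B < dim_col A" "j div dim_row B < dim_row A"
    using i j by (auto simp: less_mult_imp_div_less)
  then show "transpose_mat (kron A B) $$ (i, j) = kron (transpose_mat A) (transpose_mat B) $$ (i, j)"
    using i j b1 b2 by (simp add: kron_def)
qed (auto simp: kron_def)



lemma symp_gsym: "symp X = gsym X"
  unfolding symp_def gsym_def by simp

lemma part_b: fixes A B C :: "real mat"
  assumes A: "A \<in> carrier_mat m n" and B: "B \<in> carrier_mat m n" and C: "C \<in> carrier_mat n n"
  shows "symkron A B *\<^sub>v svec (symp C) = svec (symp (B * symp C * transpose_mat A))"
proof -
  have gC: "gsym C \<in> carrier_mat n n" by (rule gsym_carrier[OF C])
  have X: "B * gsym C * transpose_mat A \<in> carrier_mat m m" using A B gC by simp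
  have "symkron A B *\<^sub>v svec (gsym C) = svec (B * smat n (svec (gsym C)) * transpose_mat A)"
    by (rule symkron_action[OF A B svec_dim[OF gC]])
  also have "smat n (svec (gsym C)) = gsym C" using smat_svec[OF gC] gsym_gsym[OF C] by simp
  finally show ?thesis unfolding symp_gsym using svec_gsym[OF X] by simp
qed

lemma part_c: fixes A B :: "'a::real_field mat"
  assumes A: "A \<in> carrier_mat m n" and B: "B \<in> carrier_mat m n"
  shows "transpose_mat (symkron A B) = symkron (transpose_mat A) (transpose_mat B)"
proof -
  have K: "kron A B \<in> carrier_mat (m*m) (n*n)" using kron_carrier[of A B] A B by simp
  have W1: "Wmat m \<in> carrier_mat (tri m) (m*m)" by (rule Wmat_carrier)
  have W2: "transpose_mat (Wmat n) \<in> carrier_mat (n*n) (tri n)" using Wmat_carrier[of n] by simp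
  have WK: "Wmat m * kron A B \<in> carrier_mat (tri m) (n*n)" by (rule mult_carrier_mat[OF W1 K])
  have "transpose_mat (symkron A B) = transpose_mat (Wmat m * kron A B * transpose_mat (Wmat n))"
    unfolding symkron_def using A by simp
  also have "\<dots> = transpose_mat (transpose_mat (Wmat n)) * transpose_mat (Wmat m * kron A B)"
    by (rule transpose_mult[OF WK W2])
  also have "transpose_mat (Wmat m * kron A B) = transpose_mat (kron A B) * transpose_mat (Wmat m)"
    by (rule transpose_mult[OF W1 K])
  also have "transpose_mat (kron A B) = kron (transpose_mat A) (transpose_mat B)"
    by (rule kron_transpose)
  also have "transpose_mat (transpose_mat (Wmat n)) * (kron (transpose_mat A) (transpose_mat B) * transpose_mat (Wmat m))
     = Wmat n * kron (transpose_mat A) (transpose_mat B) * transpose_mat (Wmat m)"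
  proof -
    have K2: "kron (transpose_mat A) (transpose_mat B) \<in> carrier_mat (n*n) (m*m)"
      using kron_carrier[of "transpose_mat A" "transpose_mat B"] A B by simp
    have W3: "transpose_mat (Wmat m) \<in> carrier_mat (m*m) (tri m)" using W1 by simp
    show ?thesis using assoc_mult_mat[OF Wmat_carrier[of n] K2 W3] by simp
  qed
  also have "\<dots> = symkron (transpose_mat A) (transpose_mat B)"
    unfolding symkron_def using A by simp
  finally show ?thesis .
qed

lemma transpose_DSC: fixes C D S :: "'a::comm_ring_1 mat"
  assumes C: "C \<in> carrier_mat n p" and D: "D \<in> carrier_mat n p" and S: "S \<in> carrier_mat p p"
   and Ss: "transpose_mat S = S"
  shows "transpose_mat (D * S * transpose_mat C) = C * S * transpose_mat D"
proof -
  have DS: "D * S \<in> carrier_mat n p" using D S by simp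
  have Ct: "transpose_mat C \<in> carrier_mat p n" using C by simp
  have "transpose_mat (D * S * transpose_mat C) = transpose_mat (transpose_mat C) * transpose_mat (D * S)"
    by (rule transpose_mult[OF DS Ct])
  also have "transpose_mat (D * S) = transpose_mat S * transpose_mat D"
    by (rule transpose_mult[OF D S])
  also have "transpose_mat (transpose_mat C) * (transpose_mat S * transpose_mat D) = C * (S * transpose_mat D)"
    using Ss by simp
  also have "\<dots> = C * S * transpose_mat D"
    by (rule assoc_mult_mat[symmetric, OF C S]) (use D in simp)
  finally show ?thesis .
qed

lemma part_d: fixes A B C D :: "'a::real_field mat"
  assumes A: "A \<in> carrier_mat m n" and B: "B \<in> carrier_mat m n"
  and C: "C \<in> carrier_mat n p" and D: "D \<in> carrier_mat n p"
  shows "symkron A B * symkron C D = (1/2) \<cdot>\<^sub>m (symkron (A * C) (B * D) + symkron (A * D) (B * C))"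
proof (rule mat_eq_by_mult)
  have AC: "A * C \<in> carrier_mat m p" and AD: "A * D \<in> carrier_mat m p"
    and BC: "B * C \<in> carrier_mat m p" and BD: "B * D \<in> carrier_mat m p" using A B C D by auto
  show "symkron A B * symkron C D \<in> carrier_mat (tri m) (tri p)"
    by (rule mult_carrier_mat[OF symkron_carrier[OF A] symkron_carrier[OF C]])
  show R: "(1/2) \<cdot>\<^sub>m (symkron (A * C) (B * D) + symkron (A * D) (B * C)) \<in> carrier_mat (tri m) (tri p)"
    using symkron_carrier[OF AC] symkron_carrier[OF AD] by simp
  fix v :: "'a vec" assume v: "v \<in> carrier_vec (tri p)"
  define S where "S = smat p v"
  have S: "S \<in> carrier_mat p p" unfolding S_def by (rule smat_carrier)
  have Ss: "transpose_mat S = S" unfolding S_def by (rule smat_transpose)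
  define Y where "Y = D * S * transpose_mat C"
  have Y: "Y \<in> carrier_mat n n" unfolding Y_def using C D S by simp
  have Yt: "transpose_mat Y = C * S * transpose_mat D" unfolding Y_def by (rule transpose_DSC[OF C D S Ss])
  have X1: "B * Y * transpose_mat A \<in> carrier_mat m m" using A B Y by simp
  have X2: "B * transpose_mat Y * transpose_mat A \<in> carrier_mat m m" using A B Y by simp
  have "(symkron A B * symkron C D) *\<^sub>v v = symkron A B *\<^sub>v (symkron C D *\<^sub>v v)"
    by (rule assoc_mult_mat_vec[OF symkron_carrier[OF A] symkron_carrier[OF C] v])
  also have "symkron C D *\<^sub>v v = svec Y"
    unfolding Y_def S_def by (rule symkron_action[OF C D v])
  also have "symkron A B *\<^sub>v svec Y = svec (B * gsym Y * transpose_mat A)"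
    using symkron_action[OF A B svec_dim[OF Y]] smat_svec[OF Y] by simp
  also have "\<dots> = svec ((1/2) \<cdot>\<^sub>m (B * Y * transpose_mat A + B * transpose_mat Y * transpose_mat A))"
    by (simp only: gsym_mult[OF A B Y])
  also have "\<dots> = (1/2) \<cdot>\<^sub>v (svec (B * Y * transpose_mat A) + svec (B * transpose_mat Y * transpose_mat A))"
  proof -
    have X12: "B * Y * transpose_mat A + B * transpose_mat Y * transpose_mat A \<in> carrier_mat m m" using X2 by simp
    show ?thesis by (simp only: svec_smult[OF X12] svec_add[OF X1 X2])
  qed
  also have "B * Y * transpose_mat A = (B * D) * S * transpose_mat (A * C)"
    unfolding Y_def by (rule reassoc[OF A B C D S])
  also have "B * transpose_mat Y * transpose_mat A = (B * C) * S * transpose_mat (A * D)"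
    unfolding Yt by (rule reassoc[OF A B D C S])
  also have "(1/2) \<cdot>\<^sub>v (svec (B * D * S * transpose_mat (A * C)) + svec (B * C * S * transpose_mat (A * D)))
     = ((1/2) \<cdot>\<^sub>m (symkron (A * C) (B * D) + symkron (A * D) (B * C))) *\<^sub>v v"
  proof -
    have "((1/2) \<cdot>\<^sub>m (symkron (A * C) (B * D) + symkron (A * D) (B * C))) *\<^sub>v v
       = (1/2) \<cdot>\<^sub>v ((symkron (A * C) (B * D) + symkron (A * D) (B * C)) *\<^sub>v v)"
      by (rule smult_mat_vec[OF _ v, of _ "tri m"]) (use symkron_carrier[OF AC] symkron_carrier[OF AD] in simp)
    also have "(symkron (A * C) (B * D) + symkron (A * D) (B * C)) *\<^sub>v v = symkron (A * C) (B * D) *\<^sub>v v + symkron (A * D) (B * C) *\<^sub>v v"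
      by (rule add_mult_distrib_mat_vec[OF symkron_carrier[OF AC] _ v]) (use symkron_carrier[OF AD] in simp)
    also have "symkron (A * C) (B * D) *\<^sub>v v = svec (B * D * S * transpose_mat (A * C))"
      unfolding S_def by (rule symkron_action[OF AC BD v])
    also have "symkron (A * D) (B * C) *\<^sub>v v = svec (B * C * S * transpose_mat (A * D))"
      unfolding S_def by (rule symkron_action[OF AD BC v])
    finally show ?thesis by simp
  qed
  finally show "(symkron A B * symkron C D) *\<^sub>v v = ((1/2) \<cdot>\<^sub>m (symkron (A * C) (B * D) + symkron (A * D) (B * C))) *\<^sub>v v" .
qed

lemma half_double: fixes X :: "'a::real_field mat" shows "(1/2) \<cdot>\<^sub>m (X + X) = X"
  by (rule eq_matI) auto

lemma part_d2: fixes A B C :: "'a::real_field mat"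
  assumes A: "A \<in> carrier_mat m n" and B: "B \<in> carrier_mat m n" and C: "C \<in> carrier_mat n p"
  shows "symkron A B * symkron C C = symkron (A * C) (B * C)"
  using part_d[OF A B C C] half_double by simp

lemma part_e: fixes A B C :: "'a::real_field mat"
  assumes A: "A \<in> carrier_mat m n" and B: "B \<in> carrier_mat m n" and C: "C \<in> carrier_mat p m"
  shows "symkron C C * symkron A B = symkron (C * A) (C * B)"
proof -
  have "symkron (C * B) (C * A) = symkron (C * A) (C * B)"
  proof -
    have CA: "C * A \<in> carrier_mat p n" and CB: "C * B \<in> carrier_mat p n" using A B C by auto
    show ?thesis by (rule symkron_comm[OF CB CA])
  qed
  then show ?thesis using part_d[OF C C A B] half_double by simp
qed



definition outer :: "'a::comm_ring_1 vec \<Rightarrow> 'a vec \<Rightarrow> 'a mat" where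
  "outer u w = mat (dim_vec u) (dim_vec w) (\<lambda>(i,j). u $ i * w $ j)"

lemma outer_carrier: "u \<in> carrier_vec n \<Longrightarrow> w \<in> carrier_vec k \<Longrightarrow> outer u w \<in> carrier_mat n k"
  unfolding outer_def by auto

lemma outer_index: "i < dim_vec u \<Longrightarrow> j < dim_vec w \<Longrightarrow> outer u w $$ (i,j) = u $ i * w $ j"
  unfolding outer_def by simp

lemma kron_vec_outer: assumes x: "x \<in> carrier_vec n" and y: "y \<in> carrier_vec n"
  shows "kron_vec x y = mvec (outer y x)"
proof (rule eq_vecI)
  show "dim_vec (kron_vec x y) = dim_vec (mvec (outer y x))"
    using x y by (simp add: kron_vec_def outer_def)
  fix u assume "u < dim_vec (mvec (outer y x))"
  then have u: "u < n * n" using x y by (simp add: outer_def)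
  then have n0: "n > 0" by (cases n) auto
  have ud: "u mod n < n" "u div n < n" using u n0 by (auto simp: less_mult_imp_div_less)
  show "kron_vec x y $ u = mvec (outer y x) $ u"
    using x y u ud by (simp add: kron_vec_def mvec_index outer_def)
qed

lemma symkron_vec_outer: assumes x: "x \<in> carrier_vec n" and y: "y \<in> carrier_vec n"
  shows "symkron_vec (x :: 'a::real_field vec) y = svec (outer y x)"
  unfolding symkron_vec_def svec_def kron_vec_outer[OF x y] using x y by (simp add: outer_def)

lemma outer_mult: fixes A B :: "'a::comm_ring_1 mat"
  assumes B: "B \<in> carrier_mat m n" and A: "A \<in> carrier_mat m' n" and u: "u \<in> carrier_vec n" and w: "w \<in> carrier_vec n"
  shows "B * outer u w * transpose_mat A = outer (B *\<^sub>v u) (A *\<^sub>v w)"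
proof (rule eq_matI)
  fix i j assume "i < dim_row (outer (B *\<^sub>v u) (A *\<^sub>v w))" "j < dim_col (outer (B *\<^sub>v u) (A *\<^sub>v w))"
  then have i: "i < m" and j: "j < m'" using A B by (auto simp: outer_def)
  have "(B * outer u w * transpose_mat A) $$ (i,j) = (\<Sum>k<n. (\<Sum>t<n. B $$ (i,t) * (u $ t * w $ k)) * A $$ (j,k))"
    using A B u w i j by (simp add: index_mult_mat scalar_prod_def atLeast0LessThan outer_def del: assoc_mult_mat)
  also have "\<dots> = (\<Sum>k<n. \<Sum>t<n. (B $$ (i,t) * u $ t) * (A $$ (j,k) * w $ k))"
    by (intro sum.cong refl) (simp add: sum_distrib_left sum_distrib_right mult_ac)
  also have "\<dots> = (\<Sum>t<n. \<Sum>k<n. (B $$ (i,t) * u $ t) * (A $$ (j,k) * w $ k))"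
    by (rule sum.swap)
  also have "\<dots> = (\<Sum>t<n. B $$ (i,t) * u $ t) * (\<Sum>k<n. A $$ (j,k) * w $ k)"
    by (simp add: sum_product)
  also have "\<dots> = outer (B *\<^sub>v u) (A *\<^sub>v w) $$ (i,j)"
    using A B u w i j by (simp add: outer_def scalar_prod_def atLeast0LessThan)
  finally show "(B * outer u w * transpose_mat A) $$ (i,j) = outer (B *\<^sub>v u) (A *\<^sub>v w) $$ (i,j)" .
qed (use A B u w in \<open>simp_all add: outer_def\<close>)

lemma transpose_outer: "transpose_mat (outer u w) = outer w u"
  by (rule eq_matI) (auto simp: outer_def)

lemma outer_smult: "outer (a \<cdot>\<^sub>v u) (b \<cdot>\<^sub>v w) = (a * b) \<cdot>\<^sub>m outer u w"
  by (rule eq_matI) (auto simp: outer_def)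

lemma smat_zero: "smat k (0\<^sub>v (tri k)) = (0\<^sub>m k k :: 'a::real_field mat)"
  by (rule eq_matI) (auto simp: smat_def)

lemma vec_nz: assumes x: "x \<in> carrier_vec n" and nz: "x \<noteq> 0\<^sub>v n" shows "\<exists>i<n. x $ i \<noteq> 0"
proof (rule ccontr)
  assume "\<not> (\<exists>i<n. x $ i \<noteq> 0)"
  then have "x = 0\<^sub>v n" using x by (intro eq_vecI) auto
  with nz show False by simp
qed

lemma svec_outer_nz: fixes x y :: "'a::real_field vec"
  assumes x: "x \<in> carrier_vec n" and y: "y \<in> carrier_vec n" and nx: "x \<noteq> 0\<^sub>v n" and ny: "y \<noteq> 0\<^sub>v n"
  shows "svec (outer y x) \<noteq> 0\<^sub>v (tri n)"
proof
  assume h: "svec (outer y x) = 0\<^sub>v (tri n)"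
  have Y: "outer y x \<in> carrier_mat n n" by (rule outer_carrier[OF y x])
  have g: "gsym (outer y x) = 0\<^sub>m n n" using smat_svec[OF Y] h smat_zero by metis
  have F: "y $ i * x $ j + y $ j * x $ i = 0" if "i < n" "j < n" for i j
  proof -
    have "gsym (outer y x) $$ (i,j) = 0" using g that by simp
    then show ?thesis using that x y by (simp add: gsym_def outer_def)
  qed
  obtain i where i: "i < n" "x $ i \<noteq> 0" using vec_nz[OF x nx] by auto
  obtain k where k: "k < n" "y $ k \<noteq> 0" using vec_nz[OF y ny] by auto
  have "2 * (y $ i * x $ i) = y $ i * x $ i + y $ i * x $ i" by (rule mult_2)
  also have "\<dots> = 0" by (rule F[OF i(1) i(1)])
  finally have "y $ i * x $ i = 0" by simp
  then have yi: "y $ i = 0" using i by simp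
  have "y $ k * x $ i = 0" using F[OF i(1) k(1)] yi by simp
  then show False using i k by simp
qed

lemma eigen_gen: fixes A B :: "'a::real_field mat" and x y :: "'a vec"
  assumes A: "A \<in> carrier_mat n n" and B: "B \<in> carrier_mat n n"
  and x: "x \<in> carrier_vec n" and y: "y \<in> carrier_vec n" and nx: "x \<noteq> 0\<^sub>v n" and ny: "y \<noteq> 0\<^sub>v n"
  and Ax: "A *\<^sub>v x = l1 \<cdot>\<^sub>v x" and Bx: "B *\<^sub>v x = m1 \<cdot>\<^sub>v x"
  and Ay: "A *\<^sub>v y = l2 \<cdot>\<^sub>v y" and By: "B *\<^sub>v y = m2 \<cdot>\<^sub>v y"
  shows "eigenvector (symkron A B) (symkron_vec x y) ((l1 * m2 + l2 * m1) / 2)"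
proof -
  define Y where "Y = outer y x"
  have Y: "Y \<in> carrier_mat n n" unfolding Y_def by (rule outer_carrier[OF y x])
  have sv: "symkron_vec x y = svec Y" unfolding Y_def by (rule symkron_vec_outer[OF x y])
  have dimr: "dim_row (symkron A B) = tri n" using symkron_carrier[OF A, of B] by simp
  have svc: "svec Y \<in> carrier_vec (tri n)" by (rule svec_dim[OF Y])
  have Yt: "transpose_mat Y = outer x y" unfolding Y_def by (rule transpose_outer)
  have YtC: "transpose_mat Y \<in> carrier_mat n n" using Y by simp
  have e1: "B * Y * transpose_mat A = (m2 * l1) \<cdot>\<^sub>m Y"
    unfolding Y_def outer_mult[OF B A y x] By Ax outer_smult ..
  have e2: "B * transpose_mat Y * transpose_mat A = (m1 * l2) \<cdot>\<^sub>m transpose_mat Y"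
    unfolding Yt outer_mult[OF B A x y] Bx Ay outer_smult ..
  have "symkron A B *\<^sub>v svec Y = svec (B * gsym Y * transpose_mat A)"
    using symkron_action[OF A B svc] smat_svec[OF Y] by simp
  also have "\<dots> = svec ((1/2) \<cdot>\<^sub>m ((m2 * l1) \<cdot>\<^sub>m Y + (m1 * l2) \<cdot>\<^sub>m transpose_mat Y))"
    by (simp only: gsym_mult[OF A B Y] e1 e2)
  also have "\<dots> = (1/2) \<cdot>\<^sub>v ((m2 * l1) \<cdot>\<^sub>v svec Y + (m1 * l2) \<cdot>\<^sub>v svec Y)"
  proof -
    have c1: "(m2 * l1) \<cdot>\<^sub>m Y \<in> carrier_mat n n" using Y by simp
    have c2: "(m1 * l2) \<cdot>\<^sub>m transpose_mat Y \<in> carrier_mat n n" using Y by simp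
    have c3: "(m2 * l1) \<cdot>\<^sub>m Y + (m1 * l2) \<cdot>\<^sub>m transpose_mat Y \<in> carrier_mat n n" using c2 by simp
    show ?thesis
      by (simp only: svec_smult[OF c3] svec_add[OF c1 c2] svec_smult[OF Y] svec_smult[OF YtC] svec_transpose[OF Y])
  qed
  also have "\<dots> = ((l1 * m2 + l2 * m1) / 2) \<cdot>\<^sub>v svec Y"
    by (rule eq_vecI) (use svc in \<open>auto simp: field_simps\<close>)
  finally have act: "symkron A B *\<^sub>v svec Y = ((l1 * m2 + l2 * m1) / 2) \<cdot>\<^sub>v svec Y" .
  show ?thesis unfolding eigenvector_def dimr sv
    using svc act svec_outer_nz[OF x y nx ny] unfolding Y_def by simp
qed



lemma zero_comb: fixes A B :: "real mat"
  assumes A: "A \<in> carrier_mat m n" and B: "B \<in> carrier_mat m n"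
  and F: "\<And>j k i i'. j < n \<Longrightarrow> k < n \<Longrightarrow> i < m \<Longrightarrow> i' < m \<Longrightarrow>
     B $$ (i,j) * A $$ (i',k) + B $$ (i,k) * A $$ (i',j) + B $$ (i',j) * A $$ (i,k) + B $$ (i',k) * A $$ (i,j) = 0"
  shows "A = 0\<^sub>m m n \<or> B = 0\<^sub>m m n"
proof (rule ccontr)
  assume "\<not> (A = 0\<^sub>m m n \<or> B = 0\<^sub>m m n)"
  then have nA: "A \<noteq> 0\<^sub>m m n" and nB: "B \<noteq> 0\<^sub>m m n" by auto
  have "\<exists>i j. i < m \<and> j < n \<and> A $$ (i,j) \<noteq> 0"
  proof (rule ccontr)
    assume "\<not> ?thesis" then have "A = 0\<^sub>m m n" using A by (intro eq_matI) auto
    with nA show False by simp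
  qed
  then obtain i0 j0 where a: "i0 < m" "j0 < n" "A $$ (i0,j0) \<noteq> 0" by auto
  have "\<exists>i j. i < m \<and> j < n \<and> B $$ (i,j) \<noteq> 0"
  proof (rule ccontr)
    assume "\<not> ?thesis" then have "B = 0\<^sub>m m n" using B by (intro eq_matI) auto
    with nB show False by simp
  qed
  then obtain i1 k1 where b: "i1 < m" "k1 < n" "B $$ (i1,k1) \<noteq> 0" by auto
  have "B $$ (i0,j0) * A $$ (i0,j0) = 0" using F[OF a(2) a(2) a(1) a(1)] by linarith
  then have s1: "B $$ (i0,j0) = 0" using a by simp
  have "B $$ (i1,j0) * A $$ (i0,j0) = 0" using F[OF a(2) a(2) b(1) a(1)] s1 by auto
  then have s2: "B $$ (i1,j0) = 0" using a by simp
  have "B $$ (i1,k1) * A $$ (i1,k1) = 0" using F[OF b(2) b(2) b(1) b(1)] by linarith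
  then have s3: "A $$ (i1,k1) = 0" using b by simp
  have "B $$ (i1,k1) * A $$ (i0,k1) = 0" using F[OF b(2) b(2) a(1) b(1)] s3 by auto
  then have s4: "A $$ (i0,k1) = 0" using b by simp
  have "B $$ (i0,k1) * A $$ (i0,j0) = 0" using F[OF a(2) b(2) a(1) a(1)] s1 by auto
  then have s5: "B $$ (i0,k1) = 0" using a by simp
  have "B $$ (i1,k1) * A $$ (i0,j0) = 0" using F[OF a(2) b(2) a(1) b(1)] s1 s2 s4 s5 by auto
  then show False using a b by simp
qed

lemma zero_mat_vec: "v \<in> carrier_vec nc \<Longrightarrow> 0\<^sub>m nr nc *\<^sub>v v = (0\<^sub>v nr :: 'a::comm_ring_1 vec)"
  by (intro eq_vecI) (auto simp: scalar_prod_def)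

lemma unit_mult: fixes B :: "'a::comm_ring_1 mat" shows "B \<in> carrier_mat m n \<Longrightarrow> j < n \<Longrightarrow> i < m \<Longrightarrow> (B *\<^sub>v unit_vec n j) $ i = B $$ (i,j)"
  using scalar_prod_right_unit[of j n "row B i"] by simp

lemma svec_zero: "svec (0\<^sub>m k k :: 'a::real_field mat) = 0\<^sub>v (tri k)"
proof (rule eq_vecI)
  have Z: "(0\<^sub>m k k :: 'a mat) \<in> carrier_mat k k" by simp
  show "dim_vec (svec (0\<^sub>m k k :: 'a mat)) = dim_vec (0\<^sub>v (tri k) :: 'a vec)" using svec_dim[OF Z] by simp
  fix l assume "l < dim_vec (0\<^sub>v (tri k) :: 'a vec)"
  then have l: "l < tri k" by simp
  obtain r c where p: "sym_pairs k ! l = (r,c)" by fastforce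
  have rc: "r \<le> c" "c < k" using pairs_lt[OF l p] by auto
  show "svec (0\<^sub>m k k :: 'a mat) $ l = 0\<^sub>v (tri k) $ l" using svec_index[OF Z l p] rc l by simp
qed

lemma part_f: fixes A B :: "real mat"
  assumes A: "A \<in> carrier_mat m n" and B: "B \<in> carrier_mat m n"
  shows "symkron A B = 0\<^sub>m (tri m) (tri n) \<longleftrightarrow> A = 0\<^sub>m m n \<or> B = 0\<^sub>m m n"
proof
  assume Z0: "symkron A B = 0\<^sub>m (tri m) (tri n)"
  show "A = 0\<^sub>m m n \<or> B = 0\<^sub>m m n"
  proof (rule zero_comb[OF A B])
    fix j k i i' assume j: "j < n" and k: "k < n" and i: "i < m" and i': "i' < m"
    define uj where "uj = (unit_vec n j :: real vec)"
    define uk where "uk = (unit_vec n k :: real vec)"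
    have uj: "uj \<in> carrier_vec n" and uk: "uk \<in> carrier_vec n" unfolding uj_def uk_def by auto
    define E where "E = outer uj uk + outer uk uj"
    have o1: "outer uj uk \<in> carrier_mat n n" by (rule outer_carrier[OF uj uk])
    have o2: "outer uk uj \<in> carrier_mat n n" by (rule outer_carrier[OF uk uj])
    have E: "E \<in> carrier_mat n n" unfolding E_def using o2 by simp
    have Et: "transpose_mat E = E" unfolding E_def
      by (simp only: transpose_add[OF o1 o2] transpose_outer comm_add_mat[OF o2 o1])
    have gE: "gsym E = E" unfolding gsym_def Et by (rule half_double)
    have v: "svec E \<in> carrier_vec (tri n)" by (rule svec_dim[OF E])
    define Z where "Z = B * E * transpose_mat A"
    have Z: "Z \<in> carrier_mat m m" unfolding Z_def using A B E by simp
    have "svec Z = symkron A B *\<^sub>v svec E"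
      unfolding Z_def using symkron_action[OF A B v] smat_svec[OF E] gE by simp
    also have "\<dots> = 0\<^sub>v (tri m)" using Z0 zero_mat_vec[OF v] by simp
    finally have "gsym Z = 0\<^sub>m m m" using smat_svec[OF Z] smat_zero by metis
    then have g: "gsym Z $$ (i,i') = 0" using i i' by simp
    have Zs: "Z = outer (B *\<^sub>v uj) (A *\<^sub>v uk) + outer (B *\<^sub>v uk) (A *\<^sub>v uj)"
    proof -
      have At: "transpose_mat A \<in> carrier_mat n m" using A by simp
      have "Z = (B * outer uj uk + B * outer uk uj) * transpose_mat A"
        unfolding Z_def E_def by (simp only: mult_add_distrib_mat[OF B o1 o2])
      also have "\<dots> = B * outer uj uk * transpose_mat A + B * outer uk uj * transpose_mat A"
        by (rule add_mult_distrib_mat[OF _ _ At, of _ m]) (use B o1 o2 in simp_all)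
      finally show ?thesis by (simp only: outer_mult[OF B A uj uk] outer_mult[OF B A uk uj])
    qed
    have Zi: "Z $$ (a,b) = B $$ (a,j) * A $$ (b,k) + B $$ (a,k) * A $$ (b,j)" if "a < m" "b < m" for a b
      unfolding Zs using that A B j k uj uk by (simp add: outer_def uj_def uk_def unit_mult)
    have "Z $$ (i,i') + Z $$ (i',i) = 0" using g Z i i' by (simp add: gsym_def)
    then show "B $$ (i,j) * A $$ (i',k) + B $$ (i,k) * A $$ (i',j) + B $$ (i',j) * A $$ (i,k) + B $$ (i',k) * A $$ (i,j) = 0"
      using Zi[OF i i'] Zi[OF i' i] by simp
  qed
next
  assume h: "A = 0\<^sub>m m n \<or> B = 0\<^sub>m m n"
  show "symkron A B = 0\<^sub>m (tri m) (tri n)"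
  proof (rule mat_eq_by_mult[OF symkron_carrier[OF A]])
    show "0\<^sub>m (tri m) (tri n) \<in> carrier_mat (tri m) (tri n)" by simp
    fix v :: "real vec" assume v: "v \<in> carrier_vec (tri n)"
    have S: "smat n v \<in> carrier_mat n n" by (rule smat_carrier)
    have "B * smat n v * transpose_mat A = 0\<^sub>m m m"
      using h A B S by (auto intro!: eq_matI simp: scalar_prod_def)
    then show "symkron A B *\<^sub>v v = 0\<^sub>m (tri m) (tri n) *\<^sub>v v"
      using symkron_action[OF A B v] svec_zero zero_mat_vec[OF v] by simp
  qed
qed


theorem proposition3:
  fixes m n p :: nat
  shows
  "(\<forall>A B :: real mat. A \<in> carrier_mat m n \<longrightarrow> B \<in> carrier_mat m n \<longrightarrow>
      symkron A B = symkron B A)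
   \<and> (\<forall>A B C :: real mat. A \<in> carrier_mat m n \<longrightarrow> B \<in> carrier_mat m n \<longrightarrow> C \<in> carrier_mat n n \<longrightarrow>
      symkron A B *\<^sub>v svec (symp C) = svec (symp (B * symp C * transpose_mat A)))
   \<and> (\<forall>A B :: real mat. A \<in> carrier_mat m n \<longrightarrow> B \<in> carrier_mat m n \<longrightarrow>
      transpose_mat (symkron A B) = symkron (transpose_mat A) (transpose_mat B))
   \<and> (\<forall>A B C D :: real mat. A \<in> carrier_mat m n \<longrightarrow> B \<in> carrier_mat m n \<longrightarrow>
      C \<in> carrier_mat n p \<longrightarrow> D \<in> carrier_mat n p \<longrightarrow>
      symkron A B * symkron C D = (1/2) \<cdot>\<^sub>m (symkron (A * C) (B * D) + symkron (A * D) (B * C))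
      \<and> symkron A B * symkron C C = symkron (A * C) (B * C))
   \<and> (\<forall>A B C :: real mat. A \<in> carrier_mat m n \<longrightarrow> B \<in> carrier_mat m n \<longrightarrow> C \<in> carrier_mat p m \<longrightarrow>
      symkron C C * symkron A B = symkron (C * A) (C * B))
   \<and> (\<forall>(A :: real mat) (B :: real mat) (x :: complex vec) (y :: complex vec) lam1 lam2 mu1 mu2.
      A \<in> carrier_mat n n \<longrightarrow> B \<in> carrier_mat n n \<longrightarrow>
      x \<in> carrier_vec n \<longrightarrow> y \<in> carrier_vec n \<longrightarrow> x \<noteq> 0\<^sub>v n \<longrightarrow> y \<noteq> 0\<^sub>v n \<longrightarrow>
      map_mat complex_of_real A *\<^sub>v x = lam1 \<cdot>\<^sub>v x \<longrightarrow> map_mat complex_of_real B *\<^sub>v x = mu1 \<cdot>\<^sub>v x \<longrightarrow>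
      map_mat complex_of_real A *\<^sub>v y = lam2 \<cdot>\<^sub>v y \<longrightarrow> map_mat complex_of_real B *\<^sub>v y = mu2 \<cdot>\<^sub>v y \<longrightarrow>
      eigenvector (symkron (map_mat complex_of_real A) (map_mat complex_of_real B))
        (symkron_vec x y) ((lam1 * mu2 + lam2 * mu1) / 2))
   \<and> (\<forall>A B :: real mat. A \<in> carrier_mat m n \<longrightarrow> B \<in> carrier_mat m n \<longrightarrow>
      (symkron A B = 0\<^sub>m (tri m) (tri n) \<longleftrightarrow> A = 0\<^sub>m m n \<or> B = 0\<^sub>m m n))"
  proof -
  have a: "\<forall>A B :: real mat. A \<in> carrier_mat m n \<longrightarrow> B \<in> carrier_mat m n \<longrightarrow>
      symkron A B = symkron B A" by (intro allI impI) (rule symkron_comm)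
  have b: "\<forall>A B C :: real mat. A \<in> carrier_mat m n \<longrightarrow> B \<in> carrier_mat m n \<longrightarrow> C \<in> carrier_mat n n \<longrightarrow>
      symkron A B *\<^sub>v svec (symp C) = svec (symp (B * symp C * transpose_mat A))" by (intro allI impI) (rule part_b)
  have c: "\<forall>A B :: real mat. A \<in> carrier_mat m n \<longrightarrow> B \<in> carrier_mat m n \<longrightarrow>
      transpose_mat (symkron A B) = symkron (transpose_mat A) (transpose_mat B)" by (intro allI impI) (rule part_c)
  have d: "\<forall>A B C D :: real mat. A \<in> carrier_mat m n \<longrightarrow> B \<in> carrier_mat m n \<longrightarrow>
      C \<in> carrier_mat n p \<longrightarrow> D \<in> carrier_mat n p \<longrightarrow>
      symkron A B * symkron C D = (1/2) \<cdot>\<^sub>m (symkron (A * C) (B * D) + symkron (A * D) (B * C))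
      \<and> symkron A B * symkron C C = symkron (A * C) (B * C)" by (intro allI impI conjI) (rule part_d, assumption+, rule part_d2, assumption+)
  have e: "\<forall>A B C :: real mat. A \<in> carrier_mat m n \<longrightarrow> B \<in> carrier_mat m n \<longrightarrow> C \<in> carrier_mat p m \<longrightarrow>
      symkron C C * symkron A B = symkron (C * A) (C * B)" by (intro allI impI) (rule part_e)
  have f: "\<forall>(A :: real mat) (B :: real mat) (x :: complex vec) (y :: complex vec) lam1 lam2 mu1 mu2.
      A \<in> carrier_mat n n \<longrightarrow> B \<in> carrier_mat n n \<longrightarrow>
      x \<in> carrier_vec n \<longrightarrow> y \<in> carrier_vec n \<longrightarrow> x \<noteq> 0\<^sub>v n \<longrightarrow> y \<noteq> 0\<^sub>v n \<longrightarrow>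
      map_mat complex_of_real A *\<^sub>v x = lam1 \<cdot>\<^sub>v x \<longrightarrow> map_mat complex_of_real B *\<^sub>v x = mu1 \<cdot>\<^sub>v x \<longrightarrow>
      map_mat complex_of_real A *\<^sub>v y = lam2 \<cdot>\<^sub>v y \<longrightarrow> map_mat complex_of_real B *\<^sub>v y = mu2 \<cdot>\<^sub>v y \<longrightarrow>
      eigenvector (symkron (map_mat complex_of_real A) (map_mat complex_of_real B))
        (symkron_vec x y) ((lam1 * mu2 + lam2 * mu1) / 2)"
  proof (intro allI impI)
    fix A B :: "real mat" and x y :: "complex vec" and lam1 lam2 mu1 mu2
    assume h: "A \<in> carrier_mat n n" "B \<in> carrier_mat n n" "x \<in> carrier_vec n" "y \<in> carrier_vec n"
      "x \<noteq> 0\<^sub>v n" "y \<noteq> 0\<^sub>v n"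
      "map_mat complex_of_real A *\<^sub>v x = lam1 \<cdot>\<^sub>v x" "map_mat complex_of_real B *\<^sub>v x = mu1 \<cdot>\<^sub>v x"
      "map_mat complex_of_real A *\<^sub>v y = lam2 \<cdot>\<^sub>v y" "map_mat complex_of_real B *\<^sub>v y = mu2 \<cdot>\<^sub>v y"
    have A': "map_mat complex_of_real A \<in> carrier_mat n n" using h(1) by simp
    have B': "map_mat complex_of_real B \<in> carrier_mat n n" using h(2) by simp
    show "eigenvector (symkron (map_mat complex_of_real A) (map_mat complex_of_real B))
        (symkron_vec x y) ((lam1 * mu2 + lam2 * mu1) / 2)"
      by (rule eigen_gen[OF A' B' h(3-10)])
  qed
  have g: "\<forall>A B :: real mat. A \<in> carrier_mat m n \<longrightarrow> B \<in> carrier_mat m n \<longrightarrow>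
      (symkron A B = 0\<^sub>m (tri m) (tri n) \<longleftrightarrow> A = 0\<^sub>m m n \<or> B = 0\<^sub>m m n)" by (intro allI impI) (rule part_f)
  show ?thesis by (intro conjI) (rule a, rule b, rule c, rule d, rule e, rule f, rule g)
qed

end
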